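(* Let $T,\ell$ be positive integers, $\sigma\in(0,1]$ and $\delta\in(0,1)$. Let $u_1,\dots,u_T:[0,1]\to\mathbb{R}$ be piecewise Lipschitz functions, each with $\ell$ discontinuities, and let the discontinuities $d_{i,j}$ ($i\in[T]$, $j\in[\ell]$) of the $u_i$ be sampled from an adaptive sequence of $\sigma$-smooth distributions on $[0,1]$. Then for any $\alpha\ge 0.5$, with probability at least $1-\delta$ the sequence $u_1,\dots,u_T$ is $(w,k)$-dispersed for $$w=\sigma(T\ell)^{\alpha-1}\quad\text{and}\quad k=\tilde O\!\left((T\ell)^{\alpha}\ln\!\left(\frac1\delta\right)+\ln\!\left(\frac1\sigma\right)\right).$$
   Context: A distribution $\mu$ on $[0,1]$ is $\sigma$-smooth if $\mu(A)\le \mathcal{U}(A)/\sigma$ for all measurable $A$, where $\mathcal{U}$ is the uniform (Lebesgue) distribution on $[0,1]$. An adaptive sequence of $\sigma$-smooth distributions generates the points one at a time, each from a $\sigma$-smooth distribution chosen as a function of the previously realized points. If $u_i$ is piecewise Lipschitz over a partition $\mathcal{P}_i$ of $[0,1]$ (the pieces delimited by its discontinuities), $\mathcal{P}_i$ splits a set $A$ if $A$ intersects at least two sets of $\mathcal{P}_i$; the collection $u_1,\dots,u_T$ is $(w,k)$-dispersed if every interval of width $w$ is split by at most $k$ of the partitions $\mathcal{P}_1,\dots,\mathcal{P}_T$. $\tilde O$ hides polylogarithmic factors. *)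

theory Defs
  imports "HOL-Probability.Probability"
begin

text \<open>Pieces of [0,1] delimited by a finite set D of discontinuities: two points are in the
  same piece iff no discontinuity d satisfies min x y < d <= max x y (so every discontinuity
  starts a new piece, pieces are of the form [d_j, d_(j+1))).\<close>
definition same_piece :: "real set \<Rightarrow> real \<Rightarrow> real \<Rightarrow> bool" where
  "same_piece D x y \<longleftrightarrow> x \<in> {0..1} \<and> y \<in> {0..1} \<and>
      (\<forall>d\<in>D. \<not> (min x y < d \<and> d \<le> max x y))"

definition induced_partition :: "real set \<Rightarrow> real set set" where
  "induced_partition D = {0..1::real} // {(x, y). same_piece D x y}"

definition splits :: "real set set \<Rightarrow> real set \<Rightarrow> bool" where
  "splits P A \<longleftrightarrow> (\<exists>p\<in>P. \<exists>q\<in>P. p \<noteq> q \<and> p \<inter> A \<noteq> {} \<and> q \<inter> A \<noteq> {})"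

definition dispersed :: "(nat \<Rightarrow> real set set) \<Rightarrow> nat \<Rightarrow> real \<Rightarrow> nat \<Rightarrow> bool" where
  "dispersed P T w k \<longleftrightarrow> (\<forall>a::real. card {i \<in> {..<T}. splits (P i) {a..a + w}} \<le> k)"

text \<open>sigma-smooth distribution on [0,1]: mu(A) <= U(A)/sigma with U uniform on [0,1].\<close>
definition smooth_bound :: "real \<Rightarrow> real set \<Rightarrow> real" where
  "smooth_bound \<sigma> A = measure lborel (A \<inter> {0..1}) / \<sigma>"

text \<open>Joint law P (on coordinates 0..n-1) of an adaptive sequence of sigma-smooth
  distributions: for each m < n, the conditional law of coordinate m given coordinates
  0..m-1 is sigma-smooth, i.e. for every Borel A and every event B about the history,
  P(history in B and x_m in A) <= U(A)/sigma * P(history in B).\<close>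
definition adaptive_smooth_law :: "real \<Rightarrow> nat \<Rightarrow> (nat \<Rightarrow> real) measure \<Rightarrow> bool" where
  "adaptive_smooth_law \<sigma> n P \<longleftrightarrow>
     prob_space P \<and> sets P = sets (PiM {..<n} (\<lambda>_. borel)) \<and>
     (\<forall>m<n. \<forall>A\<in>sets borel. \<forall>B\<in>sets (PiM {..<m} (\<lambda>_. borel :: real measure)).
        measure P {x \<in> space P. restrict x {..<m} \<in> B \<and> x m \<in> A}
          \<le> smooth_bound \<sigma> A * measure P {x \<in> space P. restrict x {..<m} \<in> B})"

text \<open>Discontinuity set of function i (0-based) in the sampled vector x: the points
  d_(i,j) = x (i*l + j), j < l (sampled in lexicographic order of (i,j)).\<close>
definition discs :: "nat \<Rightarrow> (nat \<Rightarrow> real) \<Rightarrow> nat \<Rightarrow> real set" where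
  "discs l x i = {x (i * l + j) | j. j < l}"

end

theory Submission
  imports Defs
begin


lemma pow_fact_le_exp:
  fixes x :: real assumes "x \<ge> 0"
  shows "x ^ n / fact n \<le> exp x"
proof -
  have "x ^ n / fact n \<le> (\<Sum>k\<le>n. x ^ k / fact k)"
    by (rule member_le_sum[where f="\<lambda>k. x ^ k / fact k"]) (use assms in auto)
  also have "\<dots> \<le> exp x"
    using assms summable_exp_generic[of x]
    by (auto simp: exp_def divide_inverse ac_simps intro!: sum_le_suminf)
  finally show ?thesis .
qed

lemma binom_fact_le:
  "real (N choose r) * fact r \<le> real N ^ r"
proof (cases "r \<le> N")
  case True
  have eq: "fact N = ((N choose r) * fact r) * (fact (N - r) :: nat)"
    using binomial_fact_lemma[OF True] by (simp add: algebra_simps)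
  have "(N choose r) * fact r = fact N div (fact (N - r) :: nat)"
    unfolding eq by simp
  also have "\<dots> \<le> N ^ r" using fact_div_fact_le_pow[OF True] .
  finally have "(N choose r) * fact r \<le> N ^ r" .
  hence "real ((N choose r) * fact r) \<le> real (N ^ r)" by linarith
  thus ?thesis by simp
next
  case False
  hence "N < r" by simp
  hence "N choose r = 0" by (rule binomial_eq_0)
  hence "real (N choose r) = 0" by (simp only: of_nat_0)
  hence z: "real (N choose r) * fact r = 0" by (simp only: mult_zero_left)
  have "(0::real) \<le> real N ^ r" by simp
  thus ?thesis using z by linarith
qed

lemma binom_bound:
  fixes q :: real assumes "q \<ge> 0"
  shows "real (N choose r) * q ^ r \<le> (real N * q) ^ r / fact r"
proof -
  have "real (N choose r) * q ^ r * fact r \<le> real N ^ r * q ^ r"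
    using binom_fact_le[of N r] assms
    by (metis mult.commute mult.left_commute mult_left_mono zero_le_power)
  thus ?thesis by (simp add: field_simps power_mult_distrib)
qed

lemma tail_bound:
  fixes \<mu> :: real assumes "\<mu> \<ge> 0" "r > 0" "real r \<ge> exp 2 * \<mu>"
  shows "\<mu> ^ r / fact r \<le> exp (- real r)"
proof -
  have rp: "real r > 0" using assms by simp
  have f: "real r ^ r / exp (real r) \<le> fact r"
    using pow_fact_le_exp[of "real r" r] rp by (simp add: field_simps)
  have fp: "real r ^ r / exp (real r) > 0" using rp by simp
  have "\<mu> ^ r / fact r \<le> \<mu> ^ r / (real r ^ r / exp (real r))"
    by (rule divide_left_mono[OF f]) (use assms fp in auto)
  also have "\<dots> = (\<mu> * exp 1 / real r) ^ r"
    using rp by (simp add: field_simps power_mult_distrib power_divide exp_of_nat_mult[symmetric])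
  also have "\<dots> \<le> (exp (-1)) ^ r"
  proof (rule power_mono)
    have "exp (2::real) = exp 1 * exp 1" by (simp flip: exp_add)
    hence "\<mu> * exp 1 * exp 1 \<le> real r" using assms by (simp add: ac_simps)
    thus "\<mu> * exp 1 / real r \<le> exp (-1)" using rp
      by (simp add: exp_minus field_simps)
  qed (use assms rp in auto)
  also have "\<dots> = exp (- real r)" by (simp flip: exp_of_nat_mult)
  finally show ?thesis .
qed


lemma coll_sets:
  fixes I :: "real set" and n :: nat
  assumes "I \<in> sets borel" "S \<subseteq> {..<n}"
  shows "{y \<in> space (PiM {..<n} (\<lambda>_. borel)). \<forall>j\<in>S. y j \<in> I} \<in> sets (PiM {..<n} (\<lambda>_. borel))"
proof (rule sets.sets_Collect_finite_All)
  fix j assume j: "j \<in> S"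
  have "{y \<in> space (PiM {..<n} (\<lambda>_. borel)). y j \<in> I} = (\<lambda>y. y j) -` I \<inter> space (PiM {..<n} (\<lambda>_. borel :: real measure))"
    by auto
  also have "\<dots> \<in> sets (PiM {..<n} (\<lambda>_. borel))"
  proof (rule measurable_sets[OF _ assms(1)])
    show "(\<lambda>y. y j) \<in> PiM {..<n} (\<lambda>_. borel :: real measure) \<rightarrow>\<^sub>M borel"
      using measurable_component_singleton[of j "{..<n}" "\<lambda>_. borel :: real measure"] j assms(2) by auto
  qed
  finally show "{y \<in> space (PiM {..<n} (\<lambda>_. borel)). y j \<in> I} \<in> sets (PiM {..<n} (\<lambda>_. borel))" .
next
  show "finite S" by (meson assms(2) finite_lessThan finite_subset)
qed

lemma prod_bound:
  fixes I :: "real set"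
  assumes law: "adaptive_smooth_law \<sigma> N P" and sp: "\<sigma> > 0" and I: "I \<in> sets borel"
  shows "n \<le> N \<Longrightarrow> S \<subseteq> {..<n} \<Longrightarrow> measure P {x\<in>space P. \<forall>j\<in>S. x j \<in> I} \<le> smooth_bound \<sigma> I ^ card S"
proof (induction n arbitrary: S)
  case 0
  then show ?case using law by (auto simp: adaptive_smooth_law_def prob_space.prob_le_1)
next
  case (Suc n)
  note ps = conjunct1[OF law[unfolded adaptive_smooth_law_def]]
  have q0: "smooth_bound \<sigma> I \<ge> 0" using sp by (simp add: smooth_bound_def)
  show ?case
  proof (cases "n \<in> S")
    case False
    hence "S \<subseteq> {..<n}" using Suc.prems(2) by (force simp: less_Suc_eq)
    thus ?thesis using Suc by auto
  next
    case True
    define S' where "S' = S - {n}"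
    have S': "S' \<subseteq> {..<n}" using Suc.prems by (auto simp: S'_def)
    have fin: "finite S" using Suc.prems finite_subset by blast
    have cS: "card S = Suc (card S')" using True fin unfolding S'_def using card_Suc_Diff1 by metis
    define B where "B = {y \<in> space (PiM {..<n} (\<lambda>_. borel :: real measure)). \<forall>j\<in>S'. y j \<in> I}"
    have B: "B \<in> sets (PiM {..<n} (\<lambda>_. borel :: real measure))"
      unfolding B_def by (rule coll_sets[OF I S'])
    have nN: "n < N" using Suc.prems by simp
    have ax: "measure P {x \<in> space P. restrict x {..<n} \<in> B \<and> x n \<in> I}
          \<le> smooth_bound \<sigma> I * measure P {x \<in> space P. restrict x {..<n} \<in> B}"
      using law nN I B unfolding adaptive_smooth_law_def by blast
    have e1: "{x \<in> space P. restrict x {..<n} \<in> B \<and> x n \<in> I} = {x\<in>space P. \<forall>j\<in>S. x j \<in> I}"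
      using S' True unfolding B_def S'_def by (auto simp: space_PiM)
    have e2: "{x \<in> space P. restrict x {..<n} \<in> B} = {x\<in>space P. \<forall>j\<in>S'. x j \<in> I}"
      using S' unfolding B_def by (auto simp: space_PiM)
    have "measure P {x\<in>space P. \<forall>j\<in>S. x j \<in> I} \<le> smooth_bound \<sigma> I * measure P {x\<in>space P. \<forall>j\<in>S'. x j \<in> I}"
      using ax e1 e2 by simp
    also have "\<dots> \<le> smooth_bound \<sigma> I * smooth_bound \<sigma> I ^ card S'"
      using Suc.IH[OF _ S'] Suc.prems q0 by (simp add: mult_left_mono)
    finally show ?thesis using cS by simp
  qed
qed



lemma same_piece_sym: "same_piece D x y \<Longrightarrow> same_piece D y x"
  unfolding same_piece_def by (auto simp: min.commute max.commute)

lemma same_piece_trans: "same_piece D x y \<Longrightarrow> same_piece D y z \<Longrightarrow> same_piece D x z"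
proof -
  assume h1: "same_piece D x y" and h2: "same_piece D y z"
  show ?thesis unfolding same_piece_def
  proof (intro conjI ballI)
    show "x \<in> {0..1}" "z \<in> {0..1}" using h1 h2 unfolding same_piece_def by auto
    fix d assume d: "d \<in> D"
    have "\<not> (min x y < d \<and> d \<le> max x y)" "\<not> (min y z < d \<and> d \<le> max y z)"
      using h1 h2 d unfolding same_piece_def by auto
    thus "\<not> (min x z < d \<and> d \<le> max x z)" by (auto simp: min_def max_def split: if_splits)
  qed
qed

lemma split_disc:
  assumes "splits (induced_partition D) {a..b}"
  shows "\<exists>d\<in>D. a < d \<and> d \<le> b \<and> 0 < d \<and> d \<le> 1"
proof -
  define R where "R = {(x, y). same_piece D x y}"
  obtain p q where p: "p \<in> {0..1} // R" and q: "q \<in> {0..1} // R" and pq: "p \<noteq> q"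
    and pA: "p \<inter> {a..b} \<noteq> {}" and qA: "q \<inter> {a..b} \<noteq> {}"
    using assms unfolding splits_def induced_partition_def R_def by blast
  obtain u where u: "p = R `` {u}" using p by (auto elim: quotientE)
  obtain v where v: "q = R `` {v}" using q by (auto elim: quotientE)
  obtain x where x: "x \<in> p" "x \<in> {a..b}" using pA by blast
  obtain y where y: "y \<in> q" "y \<in> {a..b}" using qA by blast
  have ux: "same_piece D u x" using x u R_def by auto
  have vy: "same_piece D v y" using y v R_def by auto
  have "\<not> same_piece D x y"
  proof
    assume xy: "same_piece D x y"
    have "p = q"
    proof (rule set_eqI)
      fix z
      show "z \<in> p \<longleftrightarrow> z \<in> q"
      proof
        assume "z \<in> p"
        hence "same_piece D u z" using u R_def by auto
        hence "same_piece D y z" using ux xy by (meson same_piece_sym same_piece_trans)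
        hence "same_piece D v z" using vy same_piece_trans by blast
        thus "z \<in> q" using v R_def by auto
      next
        assume "z \<in> q"
        hence "same_piece D v z" using v R_def by auto
        hence "same_piece D x z" using vy xy by (meson same_piece_sym same_piece_trans)
        hence "same_piece D u z" using ux same_piece_trans by blast
        thus "z \<in> p" using u R_def by auto
      qed
    qed
    thus False using pq by simp
  qed
  moreover have "x \<in> {0..1}" "y \<in> {0..1}" using ux vy unfolding same_piece_def by auto
  ultimately obtain d where dD: "d \<in> D" and d1: "min x y < d" and d2: "d \<le> max x y"
    unfolding same_piece_def by auto
  have "a \<le> min x y" "max x y \<le> b" "0 \<le> min x y" "max x y \<le> 1"
    using x y \<open>x \<in> {0..1}\<close> \<open>y \<in> {0..1}\<close> by auto
  hence "a < d \<and> d \<le> b \<and> 0 < d \<and> d \<le> 1" using d1 d2 by linarith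
  thus ?thesis using dD by blast
qed


lemma law_space:
  assumes "adaptive_smooth_law \<sigma> N P"
  shows "space P = space (PiM {..<N} (\<lambda>_. borel :: real measure))"
    "sets P = sets (PiM {..<N} (\<lambda>_. borel :: real measure))"
proof -
  show s: "sets P = sets (PiM {..<N} (\<lambda>_. borel :: real measure))"
    using assms unfolding adaptive_smooth_law_def by blast
  show "space P = space (PiM {..<N} (\<lambda>_. borel :: real measure))"
    by (rule sets_eq_imp_space_eq[OF s])
qed

lemma U_props:
  fixes I :: "real set" and r :: nat
  assumes law: "adaptive_smooth_law \<sigma> N P" and sp: "\<sigma> > 0" and I: "I \<in> sets borel"
  defines "U \<equiv> (\<Union>S\<in>{S. S \<subseteq> {..<N} \<and> card S = r}. {x\<in>space P. \<forall>j\<in>S. x j \<in> I})"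
  shows "U \<in> sets P" "measure P U \<le> (real N * smooth_bound \<sigma> I) ^ r / fact r"
    "\<And>x. x \<in> space P - U \<Longrightarrow> card {n\<in>{..<N}. x n \<in> I} < r"
proof -
  have fin: "finite {S. S \<subseteq> {..<N} \<and> card S = r}"
    by (rule finite_subset[of _ "Pow {..<N}"]) auto
  have each: "{x\<in>space P. \<forall>j\<in>S. x j \<in> I} \<in> sets P" if "S \<subseteq> {..<N}" for S
    using coll_sets[OF I that] law_space[OF law] by simp
  show "U \<in> sets P" unfolding U_def using fin each by auto
  have "measure P U \<le> (\<Sum>S\<in>{S. S \<subseteq> {..<N} \<and> card S = r}. measure P {x\<in>space P. \<forall>j\<in>S. x j \<in> I})"
    unfolding U_def by (rule measure_UNION_le[OF fin]) (use each in auto)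
  also have "\<dots> \<le> real (card {S. S \<subseteq> {..<N} \<and> card S = r}) * smooth_bound \<sigma> I ^ r"
    by (rule sum_bounded_above) (use prod_bound[OF law sp I order_refl] in auto)
  also have "\<dots> = real (N choose r) * smooth_bound \<sigma> I ^ r"
    using n_subsets[of "{..<N}" r] by simp
  also have "\<dots> \<le> (real N * smooth_bound \<sigma> I) ^ r / fact r"
    by (rule binom_bound) (use sp in \<open>simp add: smooth_bound_def\<close>)
  finally show "measure P U \<le> (real N * smooth_bound \<sigma> I) ^ r / fact r" .
  fix x assume x: "x \<in> space P - U"
  show "card {n\<in>{..<N}. x n \<in> I} < r"
  proof (rule ccontr)
    assume "\<not> card {n\<in>{..<N}. x n \<in> I} < r"
    hence "r \<le> card {n\<in>{..<N}. x n \<in> I}" by simp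
    then obtain S where S: "S \<subseteq> {n\<in>{..<N}. x n \<in> I}" "card S = r"
      by (meson obtain_subset_with_card_n)
    hence "x \<in> U" using x unfolding U_def by blast
    thus False using x by blast
  qed
qed


lemma meas_Icc: "measure lborel {l..u::real} = (if l \<le> u then u - l else 0)"
  by (simp add: measure_def emeasure_lborel_Icc_eq)

lemma smooth_Icc:
  assumes "\<sigma> > 0" "w > 0"
  shows "smooth_bound \<sigma> {t * w .. (t + 2) * w} \<le> 2 * w / \<sigma>"
proof -
  have "measure lborel ({t * w .. (t + 2) * w} \<inter> {0..1}) \<le> 2 * w"
    using assms by (auto simp: meas_Icc algebra_simps min_def max_def)
  thus ?thesis unfolding smooth_bound_def using assms by (simp add: divide_right_mono)
qed

lemma main_fixed:
  fixes T l :: nat and \<sigma> \<delta> \<alpha> :: real and P :: "(nat \<Rightarrow> real) measure"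
  assumes T: "T > 0" and l: "l > 0" and s0: "0 < \<sigma>" and s1: "\<sigma> \<le> 1" and d0: "0 < \<delta>" and d1: "\<delta> < 1"
    and a: "\<alpha> \<ge> 1/2" and law: "adaptive_smooth_law \<sigma> (T * l) P"
  shows "\<exists>E \<in> sets P. measure P E \<ge> 1 - \<delta> \<and>
         (\<forall>x\<in>E. \<exists>k::nat.
            real k \<le> 30 * (ln (exp 1 + real (T * l))) powr 1 *
                      (real (T * l) powr \<alpha> * (1 + ln (1 / \<delta>)) + ln (1 / \<sigma>)) \<and>
            dispersed (\<lambda>i. induced_partition (discs l x i)) T
                      (\<sigma> * real (T * l) powr (\<alpha> - 1)) k)"
proof -
  define N where "N = T * l"
  define X where "X = real N powr \<alpha>"
  define L where "L = ln (exp 1 + real N)"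
  have ps: "prob_space P" using law unfolding adaptive_smooth_law_def by blast
  have "N \<ge> 1" using T l unfolding N_def by (metis One_nat_def Suc_leI nat_0_less_mult_iff)
  hence N1: "real N \<ge> 1" by simp
  have X1: "X \<ge> 1" unfolding X_def using N1 a by (intro ge_one_powr_ge_zero) auto
  have L1: "L \<ge> 1"
  proof -
    have "ln (exp 1) \<le> L" unfolding L_def using N1 by (subst ln_le_cancel_iff) (auto intro: add_pos_nonneg)
    thus ?thesis by simp
  qed
  have LN: "ln (real N) \<le> L" unfolding L_def using N1 by (subst ln_le_cancel_iff) (auto intro: add_pos_nonneg)
  have Lp: "(ln (exp 1 + real (T * l))) powr 1 = L" using L1 unfolding L_def N_def by simp
  have ld: "ln (1 / \<delta>) \<ge> 0" using d0 d1 by simp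
  have ls: "ln (1 / \<sigma>) \<ge> 0" using s0 s1 by simp
  define R where "R = 30 * L * (X * (1 + ln (1 / \<delta>)) + ln (1 / \<sigma>))"
  have LX: "L * X \<ge> X" "L * X \<ge> L" using L1 X1
    by (auto simp: mult_le_cancel_left1 mult_le_cancel_right1)
  hence LX3: "L * X \<ge> 1" using X1 by linarith
  have LXd: "L * X * ln (1 / \<delta>) \<ge> ln (1 / \<delta>)" using LX3 ld by (simp add: mult_le_cancel_right1)
  have Ls: "L * ln (1 / \<sigma>) \<ge> ln (1 / \<sigma>)" using L1 ls by (simp add: mult_le_cancel_right1)
  have Req: "30 * (ln (exp 1 + real (T * l))) powr 1 *
                      (real (T * l) powr \<alpha> * (1 + ln (1 / \<delta>)) + ln (1 / \<sigma>)) = R"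
    by (simp only: R_def X_def N_def Lp)
  have Rexp: "R = 30 * (L * X) + 30 * (L * X * ln (1 / \<delta>)) + 30 * (L * ln (1 / \<sigma>))"
    unfolding R_def by (simp add: algebra_simps)
  show ?thesis
  proof (cases "\<alpha> \<ge> 1")
    case True
    have "real N \<le> X" unfolding X_def using powr_mono[OF True N1] N1 by simp
    moreover have "T \<le> N" unfolding N_def using l by simp
    ultimately have TR: "real T \<le> R" using Rexp LX LXd Ls ld ls by linarith
    show ?thesis
    proof (intro bexI[of _ "space P"] conjI ballI exI[of _ T])
      show "space P \<in> sets P" by simp
      show "1 - \<delta> \<le> measure P (space P)" using ps d0 by (simp add: prob_space.prob_space)
      fix x
      show "real T \<le> 30 * (ln (exp 1 + real (T * l))) powr 1 *
                      (real (T * l) powr \<alpha> * (1 + ln (1 / \<delta>)) + ln (1 / \<sigma>))"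
        using TR Req by simp
      show "dispersed (\<lambda>i. induced_partition (discs l x i)) T (\<sigma> * real (T * l) powr (\<alpha> - 1)) T"
        unfolding dispersed_def
      proof
        fix a :: real
        have "card {i \<in> {..<T}. splits (induced_partition (discs l x i)) {a..a + \<sigma> * real (T * l) powr (\<alpha> - 1)}} \<le> card {..<T}"
          by (rule card_mono) auto
        thus "card {i \<in> {..<T}. splits (induced_partition (discs l x i)) {a..a + \<sigma> * real (T * l) powr (\<alpha> - 1)}} \<le> T"
          by simp
      qed
    qed
  next
    case False
    hence a1: "\<alpha> < 1" by simp
    define w where "w = \<sigma> * real (T * l) powr (\<alpha> - 1)"
    have Npos: "real N > 0" using N1 by simp
    have wpow: "real N powr (\<alpha> - 1) \<le> 1"
      using powr_mono[of "\<alpha> - 1" 0 "real N"] a1 N1 by simp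
    have w0: "w > 0" unfolding w_def N_def[symmetric] using s0 Npos by simp
    have w1: "w \<le> 1" unfolding w_def N_def[symmetric] using s1 s0 wpow
      by (metis mult_le_one less_eq_real_def powr_ge_zero)
    define K where "K = nat \<lfloor>1 / w\<rfloor>"
    have K0: "real K \<le> 1 / w" unfolding K_def using w0 by simp
    have KK: "int K = \<lfloor>1 / w\<rfloor>" unfolding K_def using w0 by simp
    define G where "G = {-2..int K}"
    have cG: "card G = K + 3" unfolding G_def by simp
    have finG: "finite G" unfolding G_def by simp
    define M where "M = real K + 3"
    have M3: "M \<ge> 3" unfolding M_def by simp
    have M4: "M \<le> 4 / w"
    proof -
      have "3 \<le> 3 / w" using w0 w1 by (simp add: field_simps)
      thus ?thesis unfolding M_def using K0 by (simp add: field_simps)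
    qed
    define I where "I = (\<lambda>t::int. {real_of_int t * w .. (real_of_int t + 2) * w})"
    define z where "z = exp 2 * (2 * X) + ln (M / \<delta>)"
    define r where "r = nat \<lceil>z\<rceil>"
    have lnMd: "ln (M / \<delta>) > 0" using M3 d0 d1 by (simp add: field_simps)
    have z0: "z > 0" unfolding z_def using lnMd X1 by (simp add: add_pos_pos)
    have r0: "r > 0" unfolding r_def using z0 by simp
    have rz: "real r \<ge> z" "real r \<le> z + 1" unfolding r_def using z0 by linarith+
    define U where "U = (\<lambda>t. \<Union>S\<in>{S. S \<subseteq> {..<N} \<and> card S = r}. {x\<in>space P. \<forall>j\<in>S. x j \<in> I t})"
    define Bad where "Bad = (\<Union>t\<in>G. U t)"
    have lawN: "adaptive_smooth_law \<sigma> N P" using law unfolding N_def .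
    have Ib: "I t \<in> sets borel" for t unfolding I_def by simp
    have NX: "real N * (2 * w / \<sigma>) = 2 * X"
    proof -
      have "real N * real N powr (\<alpha> - 1) = real N powr 1 * real N powr (\<alpha> - 1)" using Npos by simp
      also have "\<dots> = real N powr (1 + (\<alpha> - 1))" by (simp only: powr_add)
      also have "\<dots> = X" unfolding X_def by simp
      finally show ?thesis unfolding w_def N_def[symmetric] using s0 by (simp add: field_simps)
    qed
    have Ut: "U t \<in> sets P" "measure P (U t) \<le> (2 * X) ^ r / fact r"
      "\<And>x. x \<in> space P - U t \<Longrightarrow> card {n\<in>{..<N}. x n \<in> I t} < r" for t :: int
    proof -
      show "U t \<in> sets P" unfolding U_def by (rule U_props(1)[OF lawN s0 Ib[of t]])
      show "\<And>x. x \<in> space P - U t \<Longrightarrow> card {n\<in>{..<N}. x n \<in> I t} < r"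
        unfolding U_def by (rule U_props(3)[OF lawN s0 Ib[of t]])
      have q0: "smooth_bound \<sigma> (I t) \<ge> 0" using s0 by (simp add: smooth_bound_def)
      have "real N * smooth_bound \<sigma> (I t) \<le> 2 * X"
        unfolding NX[symmetric] I_def
        using mult_left_mono[OF smooth_Icc[OF s0 w0, of "real_of_int t"], of "real N"] Npos by simp
      hence "(real N * smooth_bound \<sigma> (I t)) ^ r \<le> (2 * X) ^ r"
        using q0 Npos by (intro power_mono) auto
      hence "(real N * smooth_bound \<sigma> (I t)) ^ r / fact r \<le> (2 * X) ^ r / fact r"
        by (simp add: divide_right_mono)
      thus "measure P (U t) \<le> (2 * X) ^ r / fact r"
        using U_props(2)[OF lawN s0 Ib[of t], where r=r] unfolding U_def by linarith
    qed
    have Bad_sets: "Bad \<in> sets P" unfolding Bad_def using finG Ut(1) by auto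
    have "measure P Bad \<le> (\<Sum>t\<in>G. measure P (U t))"
      unfolding Bad_def by (rule measure_UNION_le[OF finG]) (use Ut(1) in auto)
    also have "\<dots> \<le> real (card G) * ((2 * X) ^ r / fact r)"
      by (rule sum_bounded_above) (use Ut(2) in auto)
    also have "\<dots> \<le> M * exp (- real r)"
    proof -
      have "(2 * X) ^ r / fact r \<le> exp (- real r)"
        by (rule tail_bound) (use X1 r0 rz z_def lnMd in auto)
      hence "M * ((2 * X) ^ r / fact r) \<le> M * exp (- real r)"
        using M3 by (intro mult_left_mono) auto
      thus ?thesis unfolding M_def using cG by simp
    qed
    also have "\<dots> \<le> \<delta>"
    proof -
      have "0 \<le> exp 2 * (2 * X)" using X1 by simp
      hence "ln (M / \<delta>) \<le> real r" using rz(1) unfolding z_def by linarith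
      hence "exp (- real r) \<le> exp (- ln (M / \<delta>))" by simp
      also have "\<dots> = \<delta> / M" using M3 d0 by (simp add: exp_minus)
      finally show ?thesis using M3 by (simp add: field_simps)
    qed
    finally have mBad: "measure P Bad \<le> \<delta>" .
    define E where "E = space P - Bad"
    have E_sets: "E \<in> sets P" unfolding E_def using Bad_sets by auto
    have mE: "measure P E \<ge> 1 - \<delta>"
      unfolding E_def using prob_space.prob_compl[OF ps Bad_sets] mBad by simp
    have rR: "real r \<le> R"
    proof -
      have e2: "exp (2::real) \<le> 9"
      proof -
        have "exp (2::real) = exp 1 * exp 1" by (simp flip: exp_add)
        also have "\<dots> \<le> 3 * 3" by (rule mult_mono) (use exp_le in auto)
        finally show ?thesis by simp
      qed
      have eX: "exp 2 * (2 * X) \<le> 18 * X"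
      proof -
        have "exp 2 * (2 * X) = (2 * exp 2) * X" by simp
        also have "\<dots> \<le> 18 * X" using e2 X1 by (intro mult_right_mono) auto
        finally show ?thesis .
      qed
      have l4: "ln (4::real) \<le> 3" using ln_le_minus_one[of "4::real"] by simp
      have Mp: "M > 0" using M3 by simp
      have "ln M \<le> ln (4 / w)" using Mp w0 M4 by (subst ln_le_cancel_iff) auto
      also have "\<dots> = ln 4 - ln w" using w0 by (simp add: ln_div)
      also have "ln w = ln \<sigma> + (\<alpha> - 1) * ln (real N)"
        unfolding w_def N_def[symmetric] using s0 Npos by (simp add: ln_mult)
      finally have lnM1: "ln M \<le> ln 4 - ln \<sigma> - (\<alpha> - 1) * ln (real N)" by simp
      have lnN0: "ln (real N) \<ge> 0" using N1 by simp
      have "(1 - \<alpha>) * ln (real N) \<le> ln (real N)"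
        using lnN0 a a1 by (intro mult_left_le_one_le) auto
      hence lnM2: "ln M \<le> ln 4 - ln \<sigma> + ln (real N)"
        using lnM1 by (simp add: algebra_simps)
      have ls_eq: "ln (1 / \<sigma>) = - ln \<sigma>" using s0 by (simp add: ln_div)
      have lnMd_eq: "ln (M / \<delta>) = ln M + ln (1 / \<delta>)" using Mp d0 by (simp add: ln_div)
      have "real r \<le> exp 2 * (2 * X) + ln (M / \<delta>) + 1" using rz(2) unfolding z_def .
      hence A: "real r \<le> 18 * X + 4 + ln (1 / \<sigma>) + L + ln (1 / \<delta>)"
        using eX l4 lnM2 ls_eq lnMd_eq LN by linarith
      show ?thesis using A Rexp LX LX3 LXd Ls ld ls by linarith
    qed
    have disp: "dispersed (\<lambda>i. induced_partition (discs l x i)) T w r" if x: "x \<in> E" for x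
      unfolding dispersed_def
    proof
      fix a :: real
      define Sp where "Sp = {i \<in> {..<T}. splits (induced_partition (discs l x i)) {a..a + w}}"
      show "card Sp \<le> r"
      proof (cases "Sp = {}")
        case True thus ?thesis by simp
      next
        case False
        then obtain i0 where "i0 \<in> Sp" by blast
        then obtain d where d: "a < d" "d \<le> a + w" "0 < d" "d \<le> 1"
          unfolding Sp_def using split_disc by blast
        define tt where "tt = \<lfloor>a / w\<rfloor>"
        have fl: "real_of_int tt \<le> a / w" "a / w < real_of_int tt + 1"
          unfolding tt_def by linarith+
        have ttl: "real_of_int tt * w \<le> a" using fl(1) w0 by (simp add: pos_le_divide_eq)
        have ttu: "a < (real_of_int tt + 1) * w" using fl(2) w0 by (simp add: pos_divide_less_eq)
        have "a / w > -1" using d w0 by (simp add: pos_less_divide_eq)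
        hence tlo: "-2 \<le> tt" using fl(2) by linarith
        have "a / w \<le> 1 / w" using d w0 by (simp add: divide_right_mono)
        hence "tt \<le> \<lfloor>1 / w\<rfloor>" unfolding tt_def by (rule floor_mono)
        hence ttG: "tt \<in> G" using tlo KK unfolding G_def by simp
        have xU: "x \<in> space P - U tt" using x ttG unfolding E_def Bad_def by blast
        have sub: "Sp \<subseteq> (\<lambda>n. n div l) ` {n\<in>{..<N}. x n \<in> I tt}"
        proof
          fix i assume iS: "i \<in> Sp"
          hence iT: "i < T" unfolding Sp_def by simp
          obtain d' where d': "d' \<in> discs l x i" "a < d'" "d' \<le> a + w"
            using iS unfolding Sp_def using split_disc by blast
          then obtain j where j: "j < l" "d' = x (i * l + j)" unfolding discs_def by blast
          have "i * l + j < i * l + l" using j by simp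
          also have "\<dots> = (i + 1) * l" by simp
          also have "\<dots> \<le> T * l" using iT by (intro mult_le_mono1) simp
          finally have nN: "i * l + j < N" unfolding N_def .
          have dv: "(i * l + j) div l = i" using j l by simp
          have "x (i * l + j) \<in> I tt" unfolding I_def using d' j ttl ttu by (auto simp: algebra_simps)
          thus "i \<in> (\<lambda>n. n div l) ` {n\<in>{..<N}. x n \<in> I tt}"
            using nN dv by (intro image_eqI[of _ _ "i * l + j"]) auto
        qed
        have "card Sp \<le> card ((\<lambda>n. n div l) ` {n\<in>{..<N}. x n \<in> I tt})"
          by (rule card_mono[OF _ sub]) simp
        also have "\<dots> \<le> card {n\<in>{..<N}. x n \<in> I tt}" by (rule card_image_le) simp
        also have "\<dots> < r" using Ut(3)[OF xU] .
        finally show ?thesis by simp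
      qed
    qed
    show ?thesis
      using E_sets mE disp rR Req unfolding w_def by auto
  qed
qed

theorem mainTheorem7:
  shows "\<exists>C c :: real. C > 0 \<and> c \<ge> 0 \<and>
    (\<forall>(T::nat) (l::nat) (\<sigma>::real) (\<delta>::real) (\<alpha>::real) (P :: (nat \<Rightarrow> real) measure).
      T > 0 \<longrightarrow> l > 0 \<longrightarrow> 0 < \<sigma> \<longrightarrow> \<sigma> \<le> 1 \<longrightarrow> 0 < \<delta> \<longrightarrow> \<delta> < 1 \<longrightarrow> \<alpha> \<ge> 1/2 \<longrightarrow>
      adaptive_smooth_law \<sigma> (T * l) P \<longrightarrow>
      (\<exists>E \<in> sets P. measure P E \<ge> 1 - \<delta> \<and>
         (\<forall>x\<in>E. \<exists>k::nat.
            real k \<le> C * (ln (exp 1 + real (T * l))) powr c *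
                      (real (T * l) powr \<alpha> * (1 + ln (1 / \<delta>)) + ln (1 / \<sigma>)) \<and>
            dispersed (\<lambda>i. induced_partition (discs l x i)) T
                      (\<sigma> * real (T * l) powr (\<alpha> - 1)) k)))"
  apply (rule exI[of _ "30::real"], rule exI[of _ "1::real"])
  apply (intro conjI)
    apply simp
   apply simp
  apply (intro allI impI)
  apply (rule main_fixed)
         apply assumption+
  done

end
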